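(* For $n>2$, the assignment $\eta(a_{ij}^0)=a_{ij}$ and $\eta(a_{ij}^1)=\tau_i a_{ij}\tau_i$ (for $i<j$) extends to a well-defined group homomorphism $\eta\colon G_{n,\mathcal{P}}^2\to G_{n,\mathcal{D}}^2$.
   Context: $G_{n,\mathcal{P}}^2$ has generators $a_{ij}^{\epsilon}=a_{\{i,j\}}^{\epsilon}$ ($\{i,j\}\subset\{1,\dots,n\}$, $i<j$, $\epsilon\in\{0,1\}$) and relations $(a_{ij}^\epsilon)^2=1$; $a_{ij}^{\epsilon}a_{kl}^{\epsilon'}=a_{kl}^{\epsilon'}a_{ij}^{\epsilon}$ for $\{i,j\}\cap\{k,l\}=\emptyset$; $a_{ij}^{\epsilon_{ij}}a_{ik}^{\epsilon_{ik}}a_{jk}^{\epsilon_{jk}}=a_{jk}^{\epsilon_{jk}}a_{ik}^{\epsilon_{ik}}a_{ij}^{\epsilon_{ij}}$ for distinct $i,j,k$ with $\epsilon_{ij}+\epsilon_{ik}+\epsilon_{jk}\equiv0\pmod 2$. $G_{n,\mathcal{D}}^2$ ($G_n^2$ with points) has generators $a_{ij}=a_{\{i,j\}}$ ($i<j$) and $\tau_i$ ($i\in\{1,\dots,n\}$) with relations: $a_{ij}^2=1$; $a_{ij}a_{kl}=a_{kl}a_{ij}$ for distinct $i,j,k,l$; $a_{ij}a_{ik}a_{jk}=a_{jk}a_{ik}a_{ij}$ for distinct $i,j,k$; $\tau_i^2=1$; $\tau_i\tau_j=\tau_j\tau_i$; $\tau_i\tau_ja_{ij}\tau_j\tau_i=a_{ij}$;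 $a_{ij}\tau_k=\tau_ka_{ij}$ for distinct $i,j,k$. *)

theory Defs
  imports "HOL-Algebra.Group"
begin

text \<open>Words over a generator type: letters are pairs (x, b); b = False is the
generator x, b = True is its formal inverse.\<close>

type_synonym 'g word = "('g \<times> bool) list"

definition gword :: "'g set \<Rightarrow> 'g word set" where
  "gword S = lists (S \<times> UNIV)"

inductive_set pres_eq :: "'g set \<Rightarrow> ('g word \<times> 'g word) set \<Rightarrow> ('g word \<times> 'g word) set"
  for S R where
  refl: "w \<in> gword S \<Longrightarrow> (w, w) \<in> pres_eq S R"
| sym: "(u, v) \<in> pres_eq S R \<Longrightarrow> (v, u) \<in> pres_eq S R"
| trans: "(u, v) \<in> pres_eq S R \<Longrightarrow> (v, w) \<in> pres_eq S R \<Longrightarrow> (u, w) \<in> pres_eq S R"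
| rel: "(u, v) \<in> R \<Longrightarrow> u \<in> gword S \<Longrightarrow> v \<in> gword S \<Longrightarrow> (u, v) \<in> pres_eq S R"
| cancel: "x \<in> S \<Longrightarrow> ([(x, b), (x, \<not> b)], []) \<in> pres_eq S R"
| cong: "(u, v) \<in> pres_eq S R \<Longrightarrow> p \<in> gword S \<Longrightarrow> q \<in> gword S \<Longrightarrow>
         (p @ u @ q, p @ v @ q) \<in> pres_eq S R"

definition pres_group :: "'g set \<Rightarrow> ('g word \<times> 'g word) set \<Rightarrow> 'g word set monoid" where
  "pres_group S R =
     \<lparr> carrier = gword S // pres_eq S R,
       mult = (\<lambda>A B. \<Union>a\<in>A. \<Union>b\<in>B. pres_eq S R `` {a @ b}),
       one = pres_eq S R `` {[]} \<rparr>"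

definition wclass :: "'g set \<Rightarrow> ('g word \<times> 'g word) set \<Rightarrow> 'g word \<Rightarrow> 'g word set" where
  "wclass S R w = pres_eq S R `` {w}"

definition lt :: "'g \<Rightarrow> 'g \<times> bool" where
  "lt x = (x, False)"

text \<open>Generator GP i j e stands for a_{ij}^e, with 1 \<le> i < j \<le> n and e \<in> {0,1}.\<close>

datatype genP = GP nat nat nat

definition gensP :: "nat \<Rightarrow> genP set" where
  "gensP n = {GP i j e | i j e. 1 \<le> i \<and> i < j \<and> j \<le> n \<and> e \<in> {0, 1}}"

definition aP :: "nat \<Rightarrow> nat \<Rightarrow> nat \<Rightarrow> genP" where
  "aP i j e = GP (min i j) (max i j) e"

definition relsP :: "nat \<Rightarrow> (genP word \<times> genP word) set" where
  "relsP n =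
     {([lt (aP i j e), lt (aP i j e)], []) | i j e.
        i \<in> {1..n} \<and> j \<in> {1..n} \<and> i \<noteq> j \<and> e \<in> {0, 1}}
   \<union> {([lt (aP i j e), lt (aP k l e')], [lt (aP k l e'), lt (aP i j e)]) | i j k l e e'.
        i \<in> {1..n} \<and> j \<in> {1..n} \<and> k \<in> {1..n} \<and> l \<in> {1..n} \<and>
        i \<noteq> j \<and> k \<noteq> l \<and> {i, j} \<inter> {k, l} = {} \<and> e \<in> {0, 1} \<and> e' \<in> {0, 1}}
   \<union> {([lt (aP i j eij), lt (aP i k eik), lt (aP j k ejk)],
        [lt (aP j k ejk), lt (aP i k eik), lt (aP i j eij)]) | i j k eij eik ejk.
        i \<in> {1..n} \<and> j \<in> {1..n} \<and> k \<in> {1..n} \<and> i \<noteq> j \<and> i \<noteq> k \<and> j \<noteq> k \<and>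
        eij \<in> {0, 1} \<and> eik \<in> {0, 1} \<and> ejk \<in> {0, 1} \<and> (eij + eik + ejk) mod 2 = 0}"

definition GnP :: "nat \<Rightarrow> genP word set monoid" where
  "GnP n = pres_group (gensP n) (relsP n)"

text \<open>GA i j stands for a_{ij} (1 \<le> i < j \<le> n), GT i for \<tau>_i (1 \<le> i \<le> n).\<close>

datatype genD = GA nat nat | GT nat

definition gensD :: "nat \<Rightarrow> genD set" where
  "gensD n = {GA i j | i j. 1 \<le> i \<and> i < j \<and> j \<le> n} \<union> {GT i | i. 1 \<le> i \<and> i \<le> n}"

definition aD :: "nat \<Rightarrow> nat \<Rightarrow> genD" where
  "aD i j = GA (min i j) (max i j)"

definition relsD :: "nat \<Rightarrow> (genD word \<times> genD word) set" where
  "relsD n =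
     {([lt (aD i j), lt (aD i j)], []) | i j.
        i \<in> {1..n} \<and> j \<in> {1..n} \<and> i \<noteq> j}
   \<union> {([lt (aD i j), lt (aD k l)], [lt (aD k l), lt (aD i j)]) | i j k l.
        i \<in> {1..n} \<and> j \<in> {1..n} \<and> k \<in> {1..n} \<and> l \<in> {1..n} \<and>
        distinct [i, j, k, l]}
   \<union> {([lt (aD i j), lt (aD i k), lt (aD j k)], [lt (aD j k), lt (aD i k), lt (aD i j)]) | i j k.
        i \<in> {1..n} \<and> j \<in> {1..n} \<and> k \<in> {1..n} \<and> distinct [i, j, k]}
   \<union> {([lt (GT i), lt (GT i)], []) | i. i \<in> {1..n}}
   \<union> {([lt (GT i), lt (GT j)], [lt (GT j), lt (GT i)]) | i j. i \<in> {1..n} \<and> j \<in> {1..n}}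
   \<union> {([lt (GT i), lt (GT j), lt (aD i j), lt (GT j), lt (GT i)], [lt (aD i j)]) | i j.
        i \<in> {1..n} \<and> j \<in> {1..n} \<and> i \<noteq> j}
   \<union> {([lt (aD i j), lt (GT k)], [lt (GT k), lt (aD i j)]) | i j k.
        i \<in> {1..n} \<and> j \<in> {1..n} \<and> k \<in> {1..n} \<and> distinct [i, j, k]}"

definition GnD :: "nat \<Rightarrow> genD word set monoid" where
  "GnD n = pres_group (gensD n) (relsD n)"

end

theory Submission
  imports Defs
begin


lemma pe_gword: "(u,v) \<in> pres_eq S R \<Longrightarrow> u \<in> gword S \<and> v \<in> gword S"
  by (induction rule: pres_eq.induct) (auto simp: gword_def)

lemma pe_app: "(u,u') \<in> pres_eq S R \<Longrightarrow> (v,v') \<in> pres_eq S R \<Longrightarrow> (u@v, u'@v') \<in> pres_eq S R"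
proof -
  assume a: "(u,u') \<in> pres_eq S R" and b: "(v,v') \<in> pres_eq S R"
  have g: "v \<in> gword S" "u' \<in> gword S" using pe_gword[OF a] pe_gword[OF b] by auto
  have "([] @ u @ v, [] @ u' @ v) \<in> pres_eq S R"
    using g by - (rule pres_eq.cong[OF a], auto simp: gword_def)
  moreover have "(u' @ v @ [], u' @ v' @ []) \<in> pres_eq S R"
    using g by - (rule pres_eq.cong[OF b], auto simp: gword_def)
  ultimately show ?thesis by (auto intro: pres_eq.trans)
qed

definition invw :: "'g word \<Rightarrow> 'g word" where
  "invw w = rev (map (\<lambda>(x,b). (x, \<not> b)) w)"

lemma invw_gword: "w \<in> gword S \<Longrightarrow> invw w \<in> gword S"
  by (auto simp: invw_def gword_def)

lemma invw_invw[simp]: "invw (invw w) = w"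
  by (induction w) (auto simp: invw_def)

lemma invw_cancel: "w \<in> gword S \<Longrightarrow> (w @ invw w, []) \<in> pres_eq S R"
proof (induction w)
  case Nil
  then show ?case by (auto intro: pres_eq.refl simp: gword_def invw_def)
next
  case (Cons a w)
  obtain x b where ab: "a = (x,b)" by (cases a)
  have x: "x \<in> S" and w: "w \<in> gword S" using Cons.prems ab by (auto simp: gword_def)
  have "([a] @ (w @ invw w) @ [(x, \<not> b)], [a] @ [] @ [(x, \<not> b)]) \<in> pres_eq S R"
    by (rule pres_eq.cong[OF Cons.IH[OF w]]) (auto simp: gword_def ab x)
  moreover have "([(x,b), (x, \<not> b)], []) \<in> pres_eq S R" using x by (rule pres_eq.cancel)
  ultimately show ?case using ab by (auto simp: invw_def intro: pres_eq.trans)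
qed

lemma class_mult:
  assumes "w \<in> gword S" "v \<in> gword S"
  shows "mult (pres_group S R) (pres_eq S R `` {w}) (pres_eq S R `` {v}) = pres_eq S R `` {w @ v}"
proof -
  have "(w@v, w@v) \<in> pres_eq S R" using assms by (auto intro: pres_eq.refl simp: gword_def)
  moreover have "(w @ v, c) \<in> pres_eq S R" if "(w,a) \<in> pres_eq S R" "(v,b) \<in> pres_eq S R"
     "(a@b, c) \<in> pres_eq S R" for a b c
    using pe_app[OF that(1,2)] that(3) by (auto intro: pres_eq.trans)
  moreover have "(w,w) \<in> pres_eq S R" "(v,v) \<in> pres_eq S R" using assms by (auto intro: pres_eq.refl)
  ultimately show ?thesis unfolding pres_group_def by auto
qed




definition eqD :: "nat \<Rightarrow> genD word \<Rightarrow> genD word \<Rightarrow> bool" where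
  "eqD n u v \<longleftrightarrow> (u, v) \<in> pres_eq (gensD n) (relsD n)"

definition tw :: "nat \<Rightarrow> genD word" where "tw i = [lt (GT i)]"
definition aw :: "nat \<Rightarrow> nat \<Rightarrow> genD word" where "aw i j = [lt (aD i j)]"

lemma aw_sym: "aw i j = aw j i" by (simp add: aw_def aD_def min.commute max.commute)

lemma eqD_trans[trans]: "eqD n u v \<Longrightarrow> eqD n v w \<Longrightarrow> eqD n u w"
  unfolding eqD_def by (rule pres_eq.trans)
lemma eqD_sym: "eqD n u v \<Longrightarrow> eqD n v u"
  unfolding eqD_def by (rule pres_eq.sym)
lemma eqD_refl: "u \<in> gword (gensD n) \<Longrightarrow> eqD n u u"
  unfolding eqD_def by (rule pres_eq.refl)
lemma eqD_app: "eqD n u u' \<Longrightarrow> eqD n v v' \<Longrightarrow> eqD n (u@v) (u'@v')"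
  unfolding eqD_def by (rule pe_app)
lemma eqD_gw: "eqD n u v \<Longrightarrow> u \<in> gword (gensD n) \<and> v \<in> gword (gensD n)"
  unfolding eqD_def by (rule pe_gword)

lemma gw_app[simp]: "u @ v \<in> gword S \<longleftrightarrow> u \<in> gword S \<and> v \<in> gword S"
  by (auto simp: gword_def)
lemma gw_nil[simp]: "[] \<in> gword S" by (auto simp: gword_def)
lemma gw_tw[simp]: "i \<in> {1..n} \<Longrightarrow> tw i \<in> gword (gensD n)"
  by (auto simp: gword_def tw_def lt_def gensD_def)
lemma gw_aw[simp]: "i \<in> {1..n} \<Longrightarrow> j \<in> {1..n} \<Longrightarrow> i \<noteq> j \<Longrightarrow> aw i j \<in> gword (gensD n)"
  by (auto simp: gword_def aw_def lt_def gensD_def aD_def)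

lemma eqD_ctx: "eqD n u v \<Longrightarrow> p \<in> gword (gensD n) \<Longrightarrow> q \<in> gword (gensD n) \<Longrightarrow> eqD n (p@u@q) (p@v@q)"
  using eqD_app eqD_refl by metis

lemma relD: "(u,v) \<in> relsD n \<Longrightarrow> u \<in> gword (gensD n) \<Longrightarrow> v \<in> gword (gensD n) \<Longrightarrow> eqD n u v"
  unfolding eqD_def by (rule pres_eq.rel)

context fixes n :: nat begin

lemma R_AA: "i \<in> {1..n} \<Longrightarrow> j \<in> {1..n} \<Longrightarrow> i \<noteq> j \<Longrightarrow> eqD n (aw i j @ aw i j) []"
  apply (rule relD) apply (simp add: relsD_def aw_def lt_def)[1] by auto
lemma R_TT: "i \<in> {1..n} \<Longrightarrow> eqD n (tw i @ tw i) []"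
  apply (rule relD) apply (simp add: relsD_def tw_def lt_def)[1] by auto
lemma R_TcT: "i \<in> {1..n} \<Longrightarrow> j \<in> {1..n} \<Longrightarrow> eqD n (tw i @ tw j) (tw j @ tw i)"
  apply (rule relD) apply (simp add: relsD_def tw_def lt_def)[1] by auto
lemma R_TTA: "i \<in> {1..n} \<Longrightarrow> j \<in> {1..n} \<Longrightarrow> i \<noteq> j \<Longrightarrow>
   eqD n (tw i @ tw j @ aw i j @ tw j @ tw i) (aw i j)"
  apply (rule relD) apply (simp add: relsD_def tw_def aw_def lt_def)[1] by auto
lemma R_AT: "i \<in> {1..n} \<Longrightarrow> j \<in> {1..n} \<Longrightarrow> k \<in> {1..n} \<Longrightarrow> distinct [i,j,k] \<Longrightarrow>
   eqD n (aw i j @ tw k) (tw k @ aw i j)"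
  apply (rule relD) apply (simp add: relsD_def tw_def aw_def lt_def)[1] by auto
lemma R_AA': "i \<in> {1..n} \<Longrightarrow> j \<in> {1..n} \<Longrightarrow> k \<in> {1..n} \<Longrightarrow> l \<in> {1..n} \<Longrightarrow> distinct [i,j,k,l] \<Longrightarrow>
   eqD n (aw i j @ aw k l) (aw k l @ aw i j)"
proof (rule relD)
  assume h: "i \<in> {1..n}" "j \<in> {1..n}" "k \<in> {1..n}" "l \<in> {1..n}" "distinct [i,j,k,l]"
  have "(aw i j @ aw k l, aw k l @ aw i j) \<in> {([lt (aD i j), lt (aD k l)], [lt (aD k l), lt (aD i j)]) | i j k l.
        i \<in> {1..n} \<and> j \<in> {1..n} \<and> k \<in> {1..n} \<and> l \<in> {1..n} \<and>
        distinct [i, j, k, l]}" using h unfolding aw_def by auto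
  then show "(aw i j @ aw k l, aw k l @ aw i j) \<in> relsD n" unfolding relsD_def by blast
qed auto
lemma R_tri: "i \<in> {1..n} \<Longrightarrow> j \<in> {1..n} \<Longrightarrow> k \<in> {1..n} \<Longrightarrow> distinct [i,j,k] \<Longrightarrow>
   eqD n (aw i j @ aw i k @ aw j k) (aw j k @ aw i k @ aw i j)"
  apply (rule relD) apply (simp add: relsD_def aw_def lt_def)[1] by auto

end



definition cw :: "nat \<Rightarrow> genD word \<Rightarrow> genD word" where "cw m x = tw m @ x @ tw m"
definition cm :: "nat \<Rightarrow> genD word \<Rightarrow> genD word \<Rightarrow> bool" where "cm n u v = eqD n (u@v) (v@u)"

lemma cm_right: "cm n u v \<Longrightarrow> cm n u w \<Longrightarrow> cm n u (v@w)"
proof -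
  assume a: "cm n u v" and b: "cm n u w"
  have g: "v \<in> gword (gensD n)" "w \<in> gword (gensD n)" using a b unfolding cm_def
    by (auto dest: eqD_gw)
  have "eqD n ((u@v)@w) ((v@u)@w)" by (rule eqD_app[OF a[unfolded cm_def] eqD_refl[OF g(2)]])
  also have "eqD n (v@(u@w)) (v@(w@u))" by (rule eqD_app[OF eqD_refl[OF g(1)] b[unfolded cm_def]])
  ultimately show ?thesis unfolding cm_def by (auto intro: eqD_trans)
qed

lemma cm_sym: "cm n u v \<Longrightarrow> cm n v u" unfolding cm_def by (rule eqD_sym)

lemma cm_left: "cm n u w \<Longrightarrow> cm n v w \<Longrightarrow> cm n (u@v) w"
  using cm_right[of n w u v] cm_sym by blast

lemma eqD_refl': "u = v \<Longrightarrow> u \<in> gword (gensD n) \<Longrightarrow> eqD n u v"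
  using eqD_refl by blast

context fixes n :: nat begin

lemma cw_gw[simp]: "m \<in> {1..n} \<Longrightarrow> x \<in> gword (gensD n) \<Longrightarrow> cw m x \<in> gword (gensD n)"
  by (simp add: cw_def)

lemma cancel_TT: "m \<in> {1..n} \<Longrightarrow> p \<in> gword (gensD n) \<Longrightarrow> q \<in> gword (gensD n) \<Longrightarrow>
   eqD n (p @ tw m @ tw m @ q) (p @ q)"
  using eqD_ctx[OF R_TT[where n=n and i=m], where p=p and q=q] by simp

lemma cw_cong: "m \<in> {1..n} \<Longrightarrow> eqD n x y \<Longrightarrow> eqD n (cw m x) (cw m y)"
  unfolding cw_def by (rule eqD_ctx) auto

lemma conj_swap: assumes "i \<in> {1..n}" "j \<in> {1..n}" "i \<noteq> j"
  shows "eqD n (cw i (aw i j)) (cw j (aw i j))"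
proof -
  have "eqD n (cw i (aw i j)) (tw i @ (tw i @ tw j @ aw i j @ tw j @ tw i) @ tw i)"
    unfolding cw_def by (rule eqD_ctx[OF eqD_sym[OF R_TTA[where n=n and i=i and j=j]]]) (use assms in auto)
  also have "eqD n (tw i @ (tw i @ tw j @ aw i j @ tw j @ tw i) @ tw i)
     ((tw i @ tw i) @ (tw j @ aw i j @ tw j) @ (tw i @ tw i))" by (rule eqD_refl') (use assms in simp)+
  also have "eqD n ((tw i @ tw i) @ (tw j @ aw i j @ tw j) @ (tw i @ tw i)) ([] @ (tw j @ aw i j @ tw j) @ [])"
    using assms by (intro eqD_app R_TT eqD_refl) auto
  finally show ?thesis by (simp add: cw_def)
qed

lemma conj_fix: assumes "i \<in> {1..n}" "j \<in> {1..n}" "k \<in> {1..n}" "distinct [i,j,k]"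
  shows "eqD n (cw k (aw i j)) (aw i j)"
proof -
  have "eqD n (tw k @ (aw i j @ tw k) @ []) (tw k @ (tw k @ aw i j) @ [])"
    by (rule eqD_ctx[OF R_AT[where n=n and i=i and j=j and k=k]]) (use assms in auto)
  then have "eqD n (cw k (aw i j)) (tw k @ (tw k @ aw i j) @ [])" by (simp add: cw_def)
  also have "eqD n (tw k @ (tw k @ aw i j) @ []) ((tw k @ tw k) @ aw i j)" by (rule eqD_refl') (use assms in simp)+
  also have "eqD n ((tw k @ tw k) @ aw i j) ([] @ aw i j)"
    using assms by (intro eqD_app R_TT eqD_refl) auto
  finally show ?thesis by simp
qed

lemma conj_mult: "m \<in> {1..n} \<Longrightarrow> x \<in> gword (gensD n) \<Longrightarrow> y \<in> gword (gensD n) \<Longrightarrow>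
  eqD n (cw m x @ cw m y) (cw m (x @ y))"
  using cancel_TT[of m "tw m @ x" "y @ tw m"] by (simp add: cw_def)

lemma cw3: "m \<in> {1..n} \<Longrightarrow> x \<in> gword (gensD n) \<Longrightarrow> y \<in> gword (gensD n) \<Longrightarrow> z \<in> gword (gensD n) \<Longrightarrow>
  eqD n (cw m x @ cw m y @ cw m z) (cw m (x @ y @ z))"
proof -
  assume h: "m \<in> {1..n}" "x \<in> gword (gensD n)" "y \<in> gword (gensD n)" "z \<in> gword (gensD n)"
  have "eqD n (cw m x @ cw m y @ cw m z) (cw m x @ cw m (y @ z))"
    using h by (intro eqD_app eqD_refl conj_mult) auto
  also have "eqD n (cw m x @ cw m (y @ z)) (cw m (x @ y @ z))" using h by (intro conj_mult) auto
  finally show ?thesis .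
qed

lemma tri_conj: assumes "m \<in> {1..n}" "a1 \<in> gword (gensD n)" "a2 \<in> gword (gensD n)" "a3 \<in> gword (gensD n)"
  "eqD n x1 (cw m a1)" "eqD n x2 (cw m a2)" "eqD n x3 (cw m a3)"
  "eqD n (a1@a2@a3) (a3@a2@a1)"
  shows "eqD n (x1@x2@x3) (x3@x2@x1)"
proof -
  have "eqD n (x1@x2@x3) (cw m a1 @ cw m a2 @ cw m a3)" using assms by (intro eqD_app)
  also have "eqD n (cw m a1 @ cw m a2 @ cw m a3) (cw m (a1@a2@a3))" using assms by (intro cw3)
  also have "eqD n (cw m (a1@a2@a3)) (cw m (a3@a2@a1))" using assms by (intro cw_cong)
  also have "eqD n (cw m (a3@a2@a1)) (cw m a3 @ cw m a2 @ cw m a1)" using assms by (intro cw3[THEN eqD_sym])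
  also have "eqD n (cw m a3 @ cw m a2 @ cw m a1) (x3@x2@x1)"
    by (rule eqD_sym) (use assms in \<open>intro eqD_app\<close>)
  finally show ?thesis .
qed

end



fun phi :: "genP \<Rightarrow> genD word" where
  "phi (GP i j e) = (if e = 0 then [lt (GA i j)] else [lt (GT i), lt (GA i j), lt (GT i)])"

definition sub :: "genP word \<Rightarrow> genD word" where
  "sub w = concat (map (\<lambda>(x,b). if b then invw (phi x) else phi x) w)"

lemma sub_append[simp]: "sub (u @ v) = sub u @ sub v" by (simp add: sub_def)
lemma sub_nil[simp]: "sub [] = []" by (simp add: sub_def)
lemma sub_cons_lt[simp]: "sub (lt x # w) = phi x @ sub w" by (simp add: sub_def lt_def)

lemma phi_aP: "phi (aP i j e) = (if e = 0 then aw i j else cw (min i j) (aw i j))"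
  by (simp add: aP_def aw_def aD_def cw_def tw_def)

lemma phi_gw: "x \<in> gensP n \<Longrightarrow> phi x \<in> gword (gensD n)"
proof -
  assume "x \<in> gensP n"
  then obtain i j e where "x = GP i j e" "1 \<le> i" "i < j" "j \<le> n" by (auto simp: gensP_def)
  then show ?thesis by (auto simp: gword_def gensD_def lt_def)
qed

lemma sub_gw: "w \<in> gword (gensP n) \<Longrightarrow> sub w \<in> gword (gensD n)"
proof (induction w)
  case Nil then show ?case by simp
next
  case (Cons a w)
  obtain x b where ab: "a = (x,b)" by (cases a)
  have "x \<in> gensP n" "w \<in> gword (gensP n)" using Cons.prems ab by (auto simp: gword_def)
  then show ?case using Cons.IH ab phi_gw[of x n] invw_gword[of "phi x"]
    by (auto simp: sub_def)
qed

lemma min_in: "min i j = i \<or> min i j = (j::nat)" by (simp add: min_def)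

context fixes n :: nat begin

lemma img_fac: assumes "p \<in> {1..n}" "q \<in> {1..n}" "m \<in> {1..n}" "p \<noteq> q" "e \<in> {0,1}"
  "e = 1 \<Longrightarrow> m \<in> {p,q}" "e = 0 \<Longrightarrow> m \<notin> {p,q}"
  shows "eqD n (phi (aP p q e)) (cw m (aw p q))"
proof (cases "e = 0")
  case True
  then show ?thesis using assms
    by (simp add: phi_aP) (rule eqD_sym, rule conj_fix, auto)
next
  case False
  then have e: "e = 1" using assms by auto
  have m: "m = p \<or> m = q" using assms e by auto
  show ?thesis
  proof (cases "min p q = m")
    case True
    then show ?thesis using e assms by (simp add: phi_aP) (rule eqD_refl, simp)
  next
    case F: False
    have "eqD n (cw (min p q) (aw (min p q) (max p q))) (cw (max p q) (aw (min p q) (max p q)))"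
      using assms by (intro conj_swap) (auto simp: min_def max_def)
    moreover have "max p q = m" using F m by (auto simp: min_def max_def)
    moreover have "aw (min p q) (max p q) = aw p q" by (simp add: aw_def aD_def)
    ultimately show ?thesis using e by (simp add: phi_aP)
  qed
qed

lemma phi_sq: assumes "i \<in> {1..n}" "j \<in> {1..n}" "i \<noteq> j" "e \<in> {0,1}"
  shows "eqD n (phi (aP i j e) @ phi (aP i j e)) []"
proof (cases "e = 0")
  case True
  then show ?thesis using assms R_AA[of i n j] by (simp add: phi_aP)
next
  case False
  define m where "m = min i j"
  have m: "m \<in> {1..n}" using assms by (auto simp: m_def min_def)
  have "eqD n (cw m (aw i j) @ cw m (aw i j)) (cw m (aw i j @ aw i j))"
    using assms m by (intro conj_mult) auto
  also have "eqD n (cw m (aw i j @ aw i j)) (cw m [])"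
    using assms m by (intro cw_cong R_AA) auto
  also have "eqD n (cw m []) []" using R_TT[of m n] m by (simp add: cw_def)
  finally show ?thesis using False by (simp add: phi_aP m_def)
qed

lemma cm_phi_left: "i \<noteq> j \<Longrightarrow> cm n (aw i j) y \<Longrightarrow> cm n (tw (min i j)) y \<Longrightarrow> cm n (phi (aP i j e)) y"
  by (simp add: phi_aP cw_def cm_left)

lemma cm_phi_right: "i \<noteq> j \<Longrightarrow> cm n y (aw i j) \<Longrightarrow> cm n y (tw (min i j)) \<Longrightarrow> cm n y (phi (aP i j e))"
  using cm_phi_left cm_sym by blast

lemma cm_AA: "i \<in> {1..n} \<Longrightarrow> j \<in> {1..n} \<Longrightarrow> k \<in> {1..n} \<Longrightarrow> l \<in> {1..n} \<Longrightarrow> distinct [i,j,k,l] \<Longrightarrow>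
   cm n (aw i j) (aw k l)"
  unfolding cm_def by (rule R_AA')
lemma cm_AT: "i \<in> {1..n} \<Longrightarrow> j \<in> {1..n} \<Longrightarrow> k \<in> {1..n} \<Longrightarrow> distinct [i,j,k] \<Longrightarrow>
   cm n (aw i j) (tw k)"
  unfolding cm_def by (rule R_AT)
lemma cm_TT: "i \<in> {1..n} \<Longrightarrow> j \<in> {1..n} \<Longrightarrow> cm n (tw i) (tw j)"
  unfolding cm_def by (rule R_TcT)

lemma phi_far: assumes "i \<in> {1..n}" "j \<in> {1..n}" "k \<in> {1..n}" "l \<in> {1..n}" "distinct [i,j,k,l]"
  shows "cm n (phi (aP i j e)) (phi (aP k l e'))"
proof -
  have mi: "min i j \<in> {1..n}" "distinct [k, l, min i j]" using assms min_in[of i j] by auto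
  have mk: "min k l \<in> {1..n}" "distinct [i, j, min k l]" using assms min_in[of k l] by auto
  have 1: "cm n (aw i j) (phi (aP k l e'))"
    using assms mk by (intro cm_phi_right cm_AA cm_AT) auto
  have 2: "cm n (tw (min i j)) (phi (aP k l e'))"
    using assms mi mk by (intro cm_phi_right cm_TT cm_sym[OF cm_AT[of k l "min i j"]]) auto
  show ?thesis using assms 1 2 by (intro cm_phi_left) auto
qed

lemma tri_m: assumes "i \<in> {1..n}" "j \<in> {1..n}" "k \<in> {1..n}" "distinct [i,j,k]" "m \<in> {1..n}"
  "eqD n (phi (aP i j eij)) (cw m (aw i j))" "eqD n (phi (aP i k eik)) (cw m (aw i k))"
  "eqD n (phi (aP j k ejk)) (cw m (aw j k))"
  shows "eqD n (phi (aP i j eij) @ phi (aP i k eik) @ phi (aP j k ejk))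
                (phi (aP j k ejk) @ phi (aP i k eik) @ phi (aP i j eij))"
  by (rule tri_conj[of m n "aw i j" "aw i k" "aw j k"]) (use assms in \<open>auto intro: R_tri\<close>)

lemma phi_tri: assumes "i \<in> {1..n}" "j \<in> {1..n}" "k \<in> {1..n}" "distinct [i,j,k]"
  "eij \<in> {0,1}" "eik \<in> {0,1}" "ejk \<in> {0,1}" "(eij + eik + ejk) mod 2 = 0"
  shows "eqD n (phi (aP i j eij) @ phi (aP i k eik) @ phi (aP j k ejk))
                (phi (aP j k ejk) @ phi (aP i k eik) @ phi (aP i j eij))"
proof -
  consider "eij = 0 \<and> eik = 0 \<and> ejk = 0" | "eij = 1 \<and> eik = 1 \<and> ejk = 0"
    | "eij = 1 \<and> eik = 0 \<and> ejk = 1" | "eij = 0 \<and> eik = 1 \<and> ejk = 1"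
    using assms(5-8) by auto
  then show ?thesis
  proof cases
    case 1 then show ?thesis using assms R_tri[of i n j k] by (simp add: phi_aP)
  next
    case 2 then show ?thesis using assms
      by (intro tri_m[where m=i] img_fac) auto
  next
    case 3 then show ?thesis using assms
      by (intro tri_m[where m=j] img_fac) auto
  next
    case 4 then show ?thesis using assms
      by (intro tri_m[where m=k] img_fac) auto
  qed
qed

lemma rel_img: "(u, v) \<in> relsP n \<Longrightarrow> eqD n (sub u) (sub v)"
  unfolding relsP_def
proof (elim UnE)
  assume "(u, v) \<in> {([lt (aP i j e), lt (aP i j e)], []) | i j e.
        i \<in> {1..n} \<and> j \<in> {1..n} \<and> i \<noteq> j \<and> e \<in> {0, 1}}"
  then obtain i j e where "u = [lt (aP i j e), lt (aP i j e)]" "v = []"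
    "i \<in> {1..n}" "j \<in> {1..n}" "i \<noteq> j" "e \<in> {0, 1}" by blast
  then show ?thesis using phi_sq[of i j e] by simp
next
  assume "(u, v) \<in> {([lt (aP i j e), lt (aP k l e')], [lt (aP k l e'), lt (aP i j e)]) | i j k l e e'.
        i \<in> {1..n} \<and> j \<in> {1..n} \<and> k \<in> {1..n} \<and> l \<in> {1..n} \<and>
        i \<noteq> j \<and> k \<noteq> l \<and> {i, j} \<inter> {k, l} = {} \<and> e \<in> {0, 1} \<and> e' \<in> {0, 1}}"
  then obtain i j k l e e' where "u = [lt (aP i j e), lt (aP k l e')]" "v = [lt (aP k l e'), lt (aP i j e)]"
    "i \<in> {1..n}" "j \<in> {1..n}" "k \<in> {1..n}" "l \<in> {1..n}"
    "i \<noteq> j" "k \<noteq> l" "{i, j} \<inter> {k, l} = {}" by blast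
  moreover then have "distinct [i,j,k,l]" by auto
  ultimately show ?thesis using phi_far[of i j k l e e'] by (simp add: cm_def)
next
  assume "(u, v) \<in> {([lt (aP i j eij), lt (aP i k eik), lt (aP j k ejk)],
        [lt (aP j k ejk), lt (aP i k eik), lt (aP i j eij)]) | i j k eij eik ejk.
        i \<in> {1..n} \<and> j \<in> {1..n} \<and> k \<in> {1..n} \<and> i \<noteq> j \<and> i \<noteq> k \<and> j \<noteq> k \<and>
        eij \<in> {0, 1} \<and> eik \<in> {0, 1} \<and> ejk \<in> {0, 1} \<and> (eij + eik + ejk) mod 2 = 0}"
  then obtain i j k eij eik ejk where "u = [lt (aP i j eij), lt (aP i k eik), lt (aP j k ejk)]"
    "v = [lt (aP j k ejk), lt (aP i k eik), lt (aP i j eij)]"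
    "i \<in> {1..n}" "j \<in> {1..n}" "k \<in> {1..n}" "i \<noteq> j" "i \<noteq> k" "j \<noteq> k"
    "eij \<in> {0, 1}" "eik \<in> {0, 1}" "ejk \<in> {0, 1}" "(eij + eik + ejk) mod 2 = 0"
    by (simp only: mem_Collect_eq) (elim exE conjE, simp)
  then show ?thesis using phi_tri[of i j k eij eik ejk] by simp
qed
end

lemma sub_pres: "(u, v) \<in> pres_eq (gensP n) (relsP n) \<Longrightarrow> eqD n (sub u) (sub v)"
proof (induction rule: pres_eq.induct)
  case (refl w) then show ?case by (intro eqD_refl sub_gw)
next
  case (sym u v) show ?case using sym.IH by (rule eqD_sym)
next
  case (trans u v w) show ?case using trans.IH by (rule eqD_trans)
next
  case (rel u v) show ?case using rel.hyps(1) by (rule rel_img)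
next
  case (cancel x b)
  have g: "phi x \<in> gword (gensD n)" using cancel phi_gw by blast
  show ?case
  proof (cases b)
    case True
    then show ?thesis using invw_cancel[OF invw_gword[OF g], where R="relsD n"]
      by (simp add: sub_def eqD_def)
  next
    case False
    then show ?thesis using invw_cancel[OF g, where R="relsD n"]
      by (simp add: sub_def eqD_def)
  qed
next
  case (cong u v p q) show ?case using cong.IH cong.hyps(2,3) by (simp add: eqD_ctx sub_gw)
qed




definition eta :: "nat \<Rightarrow> genP word set \<Rightarrow> genD word set" where
  "eta n A = (\<Union>w\<in>A. pres_eq (gensD n) (relsD n) `` {sub w})"

lemma eta_class: assumes "w \<in> gword (gensP n)"
  shows "eta n (pres_eq (gensP n) (relsP n) `` {w}) = pres_eq (gensD n) (relsD n) `` {sub w}"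
proof
  show "eta n (pres_eq (gensP n) (relsP n) `` {w}) \<subseteq> pres_eq (gensD n) (relsD n) `` {sub w}"
  proof
    fix x assume "x \<in> eta n (pres_eq (gensP n) (relsP n) `` {w})"
    then obtain w' where "(w, w') \<in> pres_eq (gensP n) (relsP n)" "(sub w', x) \<in> pres_eq (gensD n) (relsD n)"
      unfolding eta_def by blast
    then show "x \<in> pres_eq (gensD n) (relsD n) `` {sub w}"
      using sub_pres unfolding eqD_def by (blast intro: pres_eq.trans)
  qed
next
  have "(w, w) \<in> pres_eq (gensP n) (relsP n)" using assms by (rule pres_eq.refl)
  then show "pres_eq (gensD n) (relsD n) `` {sub w} \<subseteq> eta n (pres_eq (gensP n) (relsP n) `` {w})"
    unfolding eta_def by blast
qed

lemma carrier_pres: "carrier (pres_group S R) = gword S // pres_eq S R"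
  by (simp add: pres_group_def)

theorem mainTheorem4:
  fixes n :: nat
  assumes "n > 2"
  shows "\<exists>\<eta>. \<eta> \<in> hom (GnP n) (GnD n) \<and>
    (\<forall>i j. 1 \<le> i \<and> i < j \<and> j \<le> n \<longrightarrow>
       \<eta> (wclass (gensP n) (relsP n) [lt (GP i j 0)]) = wclass (gensD n) (relsD n) [lt (GA i j)] \<and>
       \<eta> (wclass (gensP n) (relsP n) [lt (GP i j 1)]) =
         wclass (gensD n) (relsD n) [lt (GT i), lt (GA i j), lt (GT i)])"
proof (intro exI conjI allI impI)
  show "eta n \<in> hom (GnP n) (GnD n)"
  proof (rule homI)
    fix A assume "A \<in> carrier (GnP n)"
    then obtain w where w: "w \<in> gword (gensP n)" "A = pres_eq (gensP n) (relsP n) `` {w}"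
      unfolding GnP_def carrier_pres by (auto elim: quotientE)
    show "eta n A \<in> carrier (GnD n)"
      unfolding GnD_def carrier_pres w(2) eta_class[OF w(1)] by (rule quotientI) (rule sub_gw[OF w(1)])
  next
    fix A B assume "A \<in> carrier (GnP n)" "B \<in> carrier (GnP n)"
    then obtain w v where w: "w \<in> gword (gensP n)" "A = pres_eq (gensP n) (relsP n) `` {w}"
      and v: "v \<in> gword (gensP n)" "B = pres_eq (gensP n) (relsP n) `` {v}"
      unfolding GnP_def carrier_pres by (auto elim!: quotientE)
    have wv: "w @ v \<in> gword (gensP n)" using w v by simp
    show "eta n (A \<otimes>\<^bsub>GnP n\<^esub> B) = eta n A \<otimes>\<^bsub>GnD n\<^esub> eta n B"
      unfolding GnP_def GnD_def w(2) v(2) class_mult[OF w(1) v(1)] eta_class[OF wv]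
        eta_class[OF w(1)] eta_class[OF v(1)] class_mult[OF sub_gw[OF w(1)] sub_gw[OF v(1)]]
      by simp
  qed
next
  fix i j :: nat assume h: "1 \<le> i \<and> i < j \<and> j \<le> n"
  have g0: "[lt (GP i j 0)] \<in> gword (gensP n)" and g1: "[lt (GP i j 1)] \<in> gword (gensP n)"
    using h by (auto simp: gword_def gensP_def lt_def)
  show "eta n (wclass (gensP n) (relsP n) [lt (GP i j 0)]) = wclass (gensD n) (relsD n) [lt (GA i j)]"
    unfolding wclass_def eta_class[OF g0] by simp
  show "eta n (wclass (gensP n) (relsP n) [lt (GP i j 1)]) =
         wclass (gensD n) (relsD n) [lt (GT i), lt (GA i j), lt (GT i)]"
    unfolding wclass_def eta_class[OF g1] by simp
qed


end
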